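(* For any $t\in \mathbb{T}_n$ let $\hat{t}$ be its $(n\times n)$-matrix format, and let $J_n$ denote the $(n\times n)$ exchange matrix (the matrix whose entries are $1$ on the antidiagonal and $0$ everywhere else). Then $\hat{t}\, J_n$ is an uncurling metric of $\mathbb{T}_n$. Conversely, each member of the anti-rotor associated with $\mathbb{T}_n$ can be expressed as $\hat{t}\, J_n$ for some $t\in \mathbb{T}_n$.
   Context: An algebra means a real unital associative algebra with vector space of elements $\mathbb{R}^n$ (standard topology, standard basis, elements as column vectors). $\mathbb{T}_n$ is the $n$-dimensional algebra (under the usual matrix product) of real upper triangular Toeplitz $(n\times n)$-matrices; $s=(x_1,\dots,x_n)\in\mathbb{T}_n$ denotes the upper triangular Toeplitz matrix whose successive diagonals, starting with the main diagonal and moving right, have the constant values $x_1,\dots,x_n$. For an $n$-dimensional algebra $A$ with elements $s=(x_1,\dots,x_n)$ in an open ball of units centered at the identity $\mathbf{1}_A$, an uncurling metric is a real symmetric $(n\times n)$-matrix $L$ with $d\big((s^{-1})^T L\, \mathbf{d}s\big)=0$ on that ball, where $\mathbf{d}s=(dx_1,\dots,dx_n)^T$ and $d$ is the exterior derivative; the anti-rotor of $A$ is the real vector space of all uncurling metrics. *)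

theory Defs
  imports "HOL-Analysis.Analysis"
begin

text \<open>Elements of R^n are represented as functions nat => real supported on
  the index set {0..<n}; index i corresponds to the paper's coordinate x_(i+1).
  (n x n)-matrices are functions nat => nat => real, of which only entries with
  indices below n are meaningful.\<close>

definition supp_n :: "nat \<Rightarrow> (nat \<Rightarrow> real) \<Rightarrow> bool" where
  "supp_n n x \<longleftrightarrow> (\<forall>i\<ge>n. x i = 0)"

definition mat_mult :: "nat \<Rightarrow> (nat \<Rightarrow> nat \<Rightarrow> real) \<Rightarrow> (nat \<Rightarrow> nat \<Rightarrow> real) \<Rightarrow> (nat \<Rightarrow> nat \<Rightarrow> real)" where
  "mat_mult n A B = (\<lambda>i j. \<Sum>k<n. A i k * B k j)"

text \<open>Matrix format of s = (x_1,...,x_n) in T_n: upper triangular Toeplitz matrix whose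
  k-th diagonal (k = 0 main) has constant value x_(k+1).\<close>
definition toep :: "nat \<Rightarrow> (nat \<Rightarrow> real) \<Rightarrow> (nat \<Rightarrow> nat \<Rightarrow> real)" where
  "toep n x = (\<lambda>i j. if i \<le> j \<and> j < n then x (j - i) else 0)"

definition exch :: "nat \<Rightarrow> (nat \<Rightarrow> nat \<Rightarrow> real)" where
  "exch n = (\<lambda>i j. if i < n \<and> j < n \<and> i + j = n - 1 then 1 else 0)"

text \<open>The algebra T_n on R^n: product of upper triangular Toeplitz matrices; the product
  of toep s and toep t is toep of the vector below.\<close>
definition Tmul :: "nat \<Rightarrow> (nat \<Rightarrow> real) \<Rightarrow> (nat \<Rightarrow> real) \<Rightarrow> (nat \<Rightarrow> real)" where
  "Tmul n x y = (\<lambda>k. if k < n then (\<Sum>i\<le>k. x i * y (k - i)) else 0)"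

definition Tone :: "nat \<Rightarrow> (nat \<Rightarrow> real)" where
  "Tone n = (\<lambda>k. if k = 0 \<and> 0 < n then 1 else 0)"

definition alg_unit :: "nat \<Rightarrow> ((nat \<Rightarrow> real) \<Rightarrow> (nat \<Rightarrow> real) \<Rightarrow> (nat \<Rightarrow> real)) \<Rightarrow> (nat \<Rightarrow> real) \<Rightarrow> (nat \<Rightarrow> real) \<Rightarrow> bool" where
  "alg_unit n mul one x \<longleftrightarrow> (\<exists>y. supp_n n y \<and> mul x y = one \<and> mul y x = one)"

definition alg_inv :: "nat \<Rightarrow> ((nat \<Rightarrow> real) \<Rightarrow> (nat \<Rightarrow> real) \<Rightarrow> (nat \<Rightarrow> real)) \<Rightarrow> (nat \<Rightarrow> real) \<Rightarrow> (nat \<Rightarrow> real) \<Rightarrow> (nat \<Rightarrow> real)" where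
  "alg_inv n mul one x = (SOME y. supp_n n y \<and> mul x y = one \<and> mul y x = one)"

definition ball_n :: "nat \<Rightarrow> (nat \<Rightarrow> real) \<Rightarrow> real \<Rightarrow> (nat \<Rightarrow> real) set" where
  "ball_n n c r = {y. supp_n n y \<and> sqrt (\<Sum>i<n. (y i - c i)^2) < r}"

definition has_partial :: "((nat \<Rightarrow> real) \<Rightarrow> real) \<Rightarrow> nat \<Rightarrow> (nat \<Rightarrow> real) \<Rightarrow> real \<Rightarrow> bool" where
  "has_partial f k y D \<longleftrightarrow> ((\<lambda>h. f (y(k := y k + h))) has_real_derivative D) (at 0)"

text \<open>L is uncurling: symmetric, and on some open ball of units centered at the identity
  the 1-form (s^-1)^T L ds = sum_j f_j dx_j with f_j(s) = sum_i (s^-1)_i L_ij is closed,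
  i.e. d f_j / d x_k = d f_k / d x_j for all j, k.\<close>
definition uncurling_metric :: "nat \<Rightarrow> ((nat \<Rightarrow> real) \<Rightarrow> (nat \<Rightarrow> real) \<Rightarrow> (nat \<Rightarrow> real)) \<Rightarrow> (nat \<Rightarrow> real) \<Rightarrow> (nat \<Rightarrow> nat \<Rightarrow> real) \<Rightarrow> bool" where
  "uncurling_metric n mul one L \<longleftrightarrow>
     (\<forall>i<n. \<forall>j<n. L i j = L j i) \<and>
     (\<exists>r>0. (\<forall>y\<in>ball_n n one r. alg_unit n mul one y) \<and>
       (\<forall>y\<in>ball_n n one r. \<forall>j<n. \<forall>k<n. \<exists>D.
          has_partial (\<lambda>z. \<Sum>i<n. alg_inv n mul one z i * L i j) k y D \<and>
          has_partial (\<lambda>z. \<Sum>i<n. alg_inv n mul one z i * L i k) j y D))"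

definition anti_rotor :: "nat \<Rightarrow> ((nat \<Rightarrow> real) \<Rightarrow> (nat \<Rightarrow> real) \<Rightarrow> (nat \<Rightarrow> real)) \<Rightarrow> (nat \<Rightarrow> real) \<Rightarrow> (nat \<Rightarrow> nat \<Rightarrow> real) set" where
  "anti_rotor n mul one = {L. uncurling_metric n mul one L}"

end

theory Submission
  imports Defs "HOL-Computational_Algebra.Formal_Power_Series"
begin
unbundle no vec_syntax
notation fps_nth (infixl \<open>$\<close> 75)

definition Pf :: "(nat \<Rightarrow> real) \<Rightarrow> real fps" where "Pf x = Abs_fps x"
definition trn :: "nat \<Rightarrow> real fps \<Rightarrow> nat \<Rightarrow> real" where
  "trn n f = (\<lambda>k. if k < n then f $ k else 0)"
definition eqb :: "nat \<Rightarrow> real fps \<Rightarrow> real fps \<Rightarrow> bool" where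
  "eqb n f g \<longleftrightarrow> (\<forall>k<n. f $ k = g $ k)"

lemma Pf_nth[simp]: "Pf x $ k = x k" by (simp add: Pf_def)

lemma eqb_refl[simp]: "eqb n f f" by (simp add: eqb_def)
lemma eqb_sym: "eqb n f g \<Longrightarrow> eqb n g f" by (simp add: eqb_def)
lemma eqb_trans: "eqb n f g \<Longrightarrow> eqb n g h \<Longrightarrow> eqb n f h" by (simp add: eqb_def)

lemma eqb_mult: "eqb n f f' \<Longrightarrow> eqb n g g' \<Longrightarrow> eqb n (f*g) (f'*g')"
  unfolding eqb_def fps_mult_nth by (auto intro!: sum.cong)

lemma Tmul_fps: "Tmul n x y = trn n (Pf x * Pf y)"
  by (auto simp: Tmul_def trn_def fps_mult_nth atLeast0AtMost)

lemma Tone_fps: "Tone n = trn n 1"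
  by (auto simp: Tone_def trn_def)

lemma supp_trn[simp]: "supp_n n (trn n f)" by (simp add: supp_n_def trn_def)

lemma eqb_Pf_trn: "eqb n (Pf (trn n f)) f" by (simp add: eqb_def trn_def)

lemma trn_eq_iff: "trn n f = trn n g \<longleftrightarrow> eqb n f g"
  unfolding trn_def eqb_def by (metis (full_types))

lemma supp_trn_Pf: "supp_n n x \<Longrightarrow> trn n (Pf x) = x"
  by (auto simp: supp_n_def trn_def fun_eq_iff)

lemma eqb_inverse:
  assumes "f $ 0 \<noteq> 0" "eqb n f g"
  shows "eqb n (inverse f) (inverse g)"
proof (cases "n = 0")
  case True then show ?thesis by (simp add: eqb_def)
next
  case False
  then have g0: "g $ 0 \<noteq> 0" using assms by (auto simp: eqb_def)
  have "inverse f = inverse f * (g * inverse g)" using g0 by (simp add: inverse_mult_eq_1')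
  also have "\<dots> = (inverse f * g) * inverse g" by (simp add: mult.assoc)
  finally have e: "inverse f = (inverse f * g) * inverse g" .
  have "eqb n ((inverse f * g) * inverse g) ((inverse f * f) * inverse g)"
    by (rule eqb_mult[OF eqb_mult]) (use assms in \<open>auto intro: eqb_sym\<close>)
  then show ?thesis using e assms(1) by (simp add: inverse_mult_eq_1)
qed

lemma alg_inv_T:
  assumes "supp_n n y" "y 0 \<noteq> 0"
  shows "alg_unit n (Tmul n) (Tone n) y \<and> alg_inv n (Tmul n) (Tone n) y = trn n (inverse (Pf y))"
proof -
  define v where "v = trn n (inverse (Pf y))"
  have y0: "Pf y $ 0 \<noteq> 0" using assms by simp
  have "eqb n (Pf y * Pf v) (Pf y * inverse (Pf y))"
    by (rule eqb_mult) (auto simp: v_def eqb_Pf_trn)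
  then have 1: "Tmul n y v = Tone n" using y0
    by (simp add: Tmul_fps Tone_fps trn_eq_iff inverse_mult_eq_1')
  have "eqb n (Pf v * Pf y) (inverse (Pf y) * Pf y)"
    by (rule eqb_mult) (auto simp: v_def eqb_Pf_trn)
  then have 2: "Tmul n v y = Tone n" using y0
    by (simp add: Tmul_fps Tone_fps trn_eq_iff inverse_mult_eq_1)
  have P: "supp_n n v \<and> Tmul n y v = Tone n \<and> Tmul n v y = Tone n"
    using 1 2 by (simp add: v_def)
  then have U: "alg_unit n (Tmul n) (Tone n) y" unfolding alg_unit_def by blast
  define z where "z = alg_inv n (Tmul n) (Tone n) y"
  have Pz: "supp_n n z \<and> Tmul n y z = Tone n \<and> Tmul n z y = Tone n"
    unfolding z_def alg_inv_def by (rule someI[of _ v]) (rule P)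
  have zy: "eqb n (Pf z * Pf y) 1"
    using Pz by (simp add: Tmul_fps Tone_fps trn_eq_iff)
  have "Pf z = (Pf z * Pf y) * inverse (Pf y)"
    using y0 by (simp add: mult.assoc inverse_mult_eq_1')
  moreover have "eqb n ((Pf z * Pf y) * inverse (Pf y)) (1 * inverse (Pf y))"
    by (rule eqb_mult[OF zy]) simp
  ultimately have "eqb n (Pf z) (1 * inverse (Pf y))" by (simp only:)
  then have "eqb n (Pf z) (inverse (Pf y))" by simp
  then have "trn n (Pf z) = v" by (simp add: v_def trn_eq_iff)
  then have "z = v" using Pz supp_trn_Pf by simp
  then show ?thesis using U by (simp add: z_def v_def)
qed



lemma Pf_upd_nth: "Pf (y(k := y k + h)) $ i = y i + (if i = k then 1 else 0) * h"
  by simp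

lemma cont_natfun_inverse:
  assumes "y 0 \<noteq> 0"
  shows "isCont (\<lambda>h. natfun_inverse (Pf (y(k := y k + h))) a) 0"
proof (induction a rule: less_induct)
  case (less a)
  show ?case
  proof (cases a)
    case 0
    have "isCont (\<lambda>h. inverse (y 0 + (if 0 = k then 1 else 0) * h)) 0"
      using assms by (intro continuous_intros) auto
    then show ?thesis using 0 by (simp only: Pf_upd_nth fps_right_inverse_constructor.simps)
  next
    case (Suc m)
    define N where "N = (\<lambda>h b. natfun_inverse (Pf (y(k := y k + h))) b)"
    have IH: "\<And>b. b < a \<Longrightarrow> isCont (\<lambda>h. N h b) 0" unfolding N_def by (rule less.IH)
    have c0: "isCont (\<lambda>h. inverse (y 0 + (if 0 = k then 1 else 0) * h)) 0"
      using assms by (intro continuous_intros) auto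
    have "isCont (\<lambda>h. - inverse (y 0 + (if 0 = k then 1 else 0) * h) *
        (\<Sum>i\<in>{1..Suc m}. (y i + (if i = k then 1 else 0) * h) * N h (Suc m - i))) 0"
      apply (intro continuous_intros c0 IH)
      using Suc assms by auto
    then show ?thesis using Suc unfolding N_def
      by (simp only: Pf_upd_nth fps_right_inverse_constructor.simps)
  qed
qed

lemma cont_inv:
  assumes "y 0 \<noteq> 0"
  shows "isCont (\<lambda>h. inverse (Pf (y(k := y k + h))) $ a) 0"
  using cont_natfun_inverse[of y k a, OF assms] by (simp add: fps_inverse_def)



lemma partial_inv:
  assumes "supp_n n y" "y 0 \<noteq> 0" "k < n"
  shows "has_partial (\<lambda>z. \<Sum>i<n. alg_inv n (Tmul n) (Tone n) z i * L i j) k y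
           (- (\<Sum>i<n. L i j * (inverse (Pf y) * (fps_X^k * inverse (Pf y))) $ i))"
proof -
  define AI where "AI = alg_inv n (Tmul n) (Tone n)"
  define Yh where "Yh h = y(k := y k + h)" for h
  define B0 where "B0 = inverse (Pf y)"
  define F where "F h = (\<Sum>i<n. AI (Yh h) i * L i j)" for h
  define G where "G h = - (\<Sum>i<n. L i j * (inverse (Pf (Yh h)) * (fps_X^k * B0)) $ i)" for h
  have suppY: "supp_n n (Yh h)" for h using assms(1,3) by (auto simp: supp_n_def Yh_def)
  have Y0: "Yh 0 = y" by (simp add: Yh_def)
  have AI0: "AI y = trn n B0" using alg_inv_T[OF assms(1,2)] by (simp add: AI_def B0_def)
  have key: "(F h - F 0) / h = G h" if h: "h \<noteq> 0" "\<bar>h\<bar> < \<bar>y 0\<bar>" for h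
  proof -
    have Yh0: "Yh h 0 \<noteq> 0" using h by (cases "k = 0") (auto simp: Yh_def)
    define Bh where "Bh = inverse (Pf (Yh h))"
    have AIh: "AI (Yh h) = trn n Bh" using alg_inv_T[OF suppY Yh0] by (simp add: AI_def Bh_def)
    have PY: "Pf (Yh h) = Pf y + fps_const h * fps_X^k"
      by (rule fps_ext) (simp add: Yh_def)
    have "Bh - B0 = Bh * (Pf y * B0) - (Bh * Pf (Yh h)) * B0"
      using assms(2) Yh0 by (simp add: B0_def Bh_def inverse_mult_eq_1' inverse_mult_eq_1)
    also have "\<dots> = - (fps_const h * (Bh * (fps_X^k * B0)))"
      unfolding PY by (simp add: distrib_left distrib_right mult.assoc)
    finally have res: "Bh $ i - B0 $ i = - (h * (Bh * (fps_X^k * B0)) $ i)" for i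
      by (simp add: fps_eq_iff)
    have "F h - F 0 = (\<Sum>i<n. (Bh $ i - B0 $ i) * L i j)"
      unfolding F_def AIh Y0 AI0 sum_subtractf[symmetric] by (intro sum.cong) (auto simp: trn_def left_diff_distrib)
    also have "\<dots> = h * G h"
      unfolding res G_def Bh_def[symmetric] by (simp add: sum_distrib_left sum_negf[symmetric] mult_ac)
    finally show ?thesis using h by simp
  qed
  have cG: "isCont G 0"
    unfolding G_def fps_mult_nth
    by (intro continuous_intros cont_inv[of y k, unfolded Yh_def[symmetric]] assms(2))
  have G0: "G 0 = - (\<Sum>i<n. L i j * (inverse (Pf y) * (fps_X^k * inverse (Pf y))) $ i)"
    by (simp add: G_def Y0 B0_def)
  have ev: "\<forall>\<^sub>F h in at 0. (F h - F 0) / (h - 0) = G h"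
    unfolding eventually_at
    proof (intro exI[of _ "\<bar>y 0\<bar>"] conjI ballI impI)
      show "0 < \<bar>y 0\<bar>" using assms(2) by simp
    next
      fix x :: real assume "x \<noteq> 0 \<and> dist x 0 < \<bar>y 0\<bar>"
      then show "(F x - F 0) / (x - 0) = G x" using key[of x] by (simp add: dist_real_def)
    qed
  have "((\<lambda>h. (F h - F 0) / (h - 0)) \<longlongrightarrow> G 0) (at 0)"
    using cG unfolding isCont_def by (rule tendsto_cong[THEN iffD2, OF ev, rotated]) 
  then have "(F has_real_derivative G 0) (at 0)"
    by (simp add: has_field_derivative_iff)
  then show ?thesis
    unfolding has_partial_def G0[symmetric] F_def Yh_def AI_def Y0 by simp
qed



lemma reidx:
  fixes n k :: nat and f w :: "nat \<Rightarrow> real"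
  shows "(\<Sum>i<n. f i * (if i < k then 0 else w (i - k))) =
   (\<Sum>m<n. w m * (if m + k < n then f (m + k) else 0 :: real))"
proof -
  have "(\<Sum>i<n. f i * (if i < k then 0 else w (i - k))) = (\<Sum>i\<in>{k..<n}. f i * w (i - k))"
    by (rule sum.mono_neutral_cong_right) auto
  also have "\<dots> = (\<Sum>m\<in>{0..<n-k}. f (m + k) * w m)"
  proof (cases "k \<le> n")
    case True
    then show ?thesis
      using sum.shift_bounds_nat_ivl[of "\<lambda>i. f i * w (i - k)" 0 k "n-k"] by simp
  qed simp
  also have "\<dots> = (\<Sum>m<n. w m * (if m + k < n then f (m + k) else 0))"
    by (rule sum.mono_neutral_cong_left) auto
  finally show ?thesis .
qed

lemma Xk_nth:
  fixes B :: "real fps"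
  shows "(B * (fps_X^k * B)) $ i = (if i < k then 0 else (B * B) $ (i - k))"
  by (simp add: mult.left_commute[of B] fps_X_power_mult_nth)

lemma mat_formula:
  assumes "i < n" "j < n"
  shows "mat_mult n (toep n t) (exch n) i j = (if i + j < n then t (n - 1 - (i + j)) else 0)"
proof -
  have "mat_mult n (toep n t) (exch n) i j = (\<Sum>k<n. toep n t i k * (if k = n - 1 - j then 1 else 0))"
    unfolding mat_mult_def exch_def using assms by (intro sum.cong) auto
  also have "\<dots> = toep n t i (n - 1 - j)"
    using assms by (simp add: mult.commute[of _ "if _ then _ else _"] if_distrib sum.delta' cong: if_cong)
  also have "\<dots> = (if i + j < n then t (n - 1 - (i + j)) else 0)"
    using assms by (auto simp: toep_def add.commute)
  finally show ?thesis .
qed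

lemma ball_y0:
  assumes "y \<in> ball_n n c r" "n \<ge> 1" "r \<le> \<bar>c 0\<bar>"
  shows "y 0 \<noteq> 0"
proof -
  have "(y 0 - c 0)^2 \<le> (\<Sum>i<n. (y i - c i)^2)"
    using assms(2) by (intro member_le_sum[of 0 "{..<n}" "\<lambda>i. (y i - c i)^2"]) auto
  then have "\<bar>y 0 - c 0\<bar> \<le> sqrt (\<Sum>i<n. (y i - c i)^2)"
    using real_sqrt_le_mono by fastforce
  then show ?thesis using assms(1,3) by (auto simp: ball_n_def)
qed

lemma Tone0: "n \<ge> 1 \<Longrightarrow> Tone n 0 = 1" by (simp add: Tone_def)

lemma ball_supp: "y \<in> ball_n n c r \<Longrightarrow> supp_n n y" by (simp add: ball_n_def)

lemma forward:
  assumes "n \<ge> 1" "supp_n n t"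
  shows "uncurling_metric n (Tmul n) (Tone n) (mat_mult n (toep n t) (exch n))"
proof -
  define L where "L = mat_mult n (toep n t) (exch n)"
  define g where "g s = (if s < n then t (n - 1 - s) else 0)" for s
  have Lg: "L i j = g (i + j)" if "i < n" "j < n" for i j
    using mat_formula[OF that] by (simp add: L_def g_def)
  have sym: "\<forall>i<n. \<forall>j<n. L i j = L j i" by (simp add: Lg add.commute)
  have Dsym: "(\<Sum>i<n. L i j * (B * (fps_X^k * B)) $ i) = (\<Sum>i<n. L i k * (B * (fps_X^j * B)) $ i)"
    if "j < n" "k < n" for j k and B :: "real fps"
  proof -
    have e: "(\<Sum>i<n. L i j * (B * (fps_X^k * B)) $ i) = (\<Sum>m<n. (B * B) $ m * g (m + k + j))"
      if "j < n" for j k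
    proof -
      have "(\<Sum>i<n. L i j * (B * (fps_X^k * B)) $ i) =
            (\<Sum>i<n. L i j * (if i < k then 0 else (B * B) $ (i - k)))"
        by (simp add: Xk_nth)
      also have "\<dots> = (\<Sum>m<n. (B * B) $ m * (if m + k < n then L (m + k) j else 0))"
        by (rule reidx)
      also have "\<dots> = (\<Sum>m<n. (B * B) $ m * g (m + k + j))"
        using \<open>j < n\<close> by (intro sum.cong) (auto simp: Lg g_def)
      finally show ?thesis .
    qed
    show ?thesis using e[of j k] e[of k j] that by (simp add: add_ac)
  qed
  have U: "y 0 \<noteq> 0 \<and> supp_n n y" if y: "y \<in> ball_n n (Tone n) 1" for y
    using ball_y0[OF y assms(1)] Tone0[OF assms(1)] ball_supp[OF y] by simp
  have A: "\<forall>y\<in>ball_n n (Tone n) 1. alg_unit n (Tmul n) (Tone n) y"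
    using alg_inv_T U by blast
  have B: "\<forall>y\<in>ball_n n (Tone n) 1. \<forall>j<n. \<forall>k<n. \<exists>D.
      has_partial (\<lambda>z. \<Sum>i<n. alg_inv n (Tmul n) (Tone n) z i * L i j) k y D \<and>
      has_partial (\<lambda>z. \<Sum>i<n. alg_inv n (Tmul n) (Tone n) z i * L i k) j y D"
  proof (intro ballI allI impI)
    fix y j k assume y: "y \<in> ball_n n (Tone n) 1" and jk: "j < n" "k < n"
    have s: "supp_n n y" and y0: "y 0 \<noteq> 0" using U[OF y] by auto
    show "\<exists>D. has_partial (\<lambda>z. \<Sum>i<n. alg_inv n (Tmul n) (Tone n) z i * L i j) k y D \<and>
             has_partial (\<lambda>z. \<Sum>i<n. alg_inv n (Tmul n) (Tone n) z i * L i k) j y D"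
      using partial_inv[OF s y0 jk(2), of L j] partial_inv[OF s y0 jk(1), of L k] Dsym[OF jk, of "inverse (Pf y)"]
      by auto
  qed
  show ?thesis
    unfolding uncurling_metric_def L_def[symmetric]
    using sym A B by (intro conjI exI[of _ 1]) auto
qed



lemma uu_nth:
  fixes e :: real
  shows "((1 + fps_const e * fps_X^p) * (1 + fps_const e * fps_X^p)) $ m =
     (if m = 0 then 1 else 0) + 2 * e * (if m = p then 1 else 0) + e^2 * (if m = 2 * p then 1 else 0)"
proof -
  define c where "c = fps_const e * fps_X^p"
  have 1: "(1 + c) * (1 + c) = 1 + 2 * c + c * c"
    by (simp only: distrib_left distrib_right mult_1_left mult_1_right mult_2 add_ac)
  have 2: "c * c = fps_const (e * e) * fps_X^(p + p)"
    unfolding c_def power_add by (simp only: mult_ac fps_const_mult[symmetric])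
  have 3: "(2 * c) $ m = 2 * e * (if m = p then 1 else 0)"
    unfolding c_def mult_2 by simp
  show ?thesis unfolding c_def[symmetric] 1 fps_add_nth 2 3
    by (simp add: power2_eq_square)
qed

lemma sum_delta_mult: fixes n c :: nat shows "(\<Sum>m<n. (if m = c then 1 else 0) * a m) = (if c < n then a c else (0::real))"
proof -
  have e: "(\<lambda>m. (if m = c then 1 else 0) * a m) = (\<lambda>m. if m = c then a c else 0)" by auto
  show ?thesis unfolding e using sum.delta[of "{..<n}" c "\<lambda>_. a c"] by simp
qed

lemma sum_uu:
  fixes e :: real
  assumes "1 \<le> p" "p < n"
  shows "(\<Sum>m<n. ((1 + fps_const e * fps_X^p) * (1 + fps_const e * fps_X^p)) $ m * a m) =
     a 0 + 2 * e * a p + e^2 * (if 2 * p < n then a (2*p) else 0)"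
proof -
  have "(\<Sum>m<n. ((1 + fps_const e * fps_X^p) * (1 + fps_const e * fps_X^p)) $ m * a m) =
     (\<Sum>m<n. (if m = 0 then 1 else 0) * a m) + 2 * e * (\<Sum>m<n. (if m = p then 1 else 0) * a m)
     + e^2 * (\<Sum>m<n. (if m = 2 * p then 1 else 0) * a m)"
    unfolding uu_nth by (simp add: sum.distrib sum_distrib_left distrib_right mult.assoc)
  then show ?thesis unfolding sum_delta_mult using assms by simp
qed

lemma cond_y:
  assumes "supp_n n y" "y 0 \<noteq> 0" "j < n" "0 < n"
    and "\<exists>D. has_partial (\<lambda>z. \<Sum>i<n. alg_inv n (Tmul n) (Tone n) z i * L i j) 0 y D \<and>
             has_partial (\<lambda>z. \<Sum>i<n. alg_inv n (Tmul n) (Tone n) z i * L i 0) j y D"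
  shows "(\<Sum>m<n. (inverse (Pf y) * inverse (Pf y)) $ m * (L m j - (if m + j < n then L (m + j) 0 else 0))) = 0"
proof -
  define B where "B = inverse (Pf y)"
  obtain D where D1: "has_partial (\<lambda>z. \<Sum>i<n. alg_inv n (Tmul n) (Tone n) z i * L i j) 0 y D"
    and D2: "has_partial (\<lambda>z. \<Sum>i<n. alg_inv n (Tmul n) (Tone n) z i * L i 0) j y D"
    using assms(5) by blast
  have E1: "D = - (\<Sum>i<n. L i j * (B * (fps_X^0 * B)) $ i)"
    using DERIV_unique D1 partial_inv[OF assms(1,2,4), of L j] unfolding has_partial_def B_def by blast
  have E2: "D = - (\<Sum>i<n. L i 0 * (B * (fps_X^j * B)) $ i)"
    using DERIV_unique D2 partial_inv[OF assms(1,2,3), of L 0] unfolding has_partial_def B_def by blast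
  have F1: "(\<Sum>i<n. L i j * (B * (fps_X^0 * B)) $ i) = (\<Sum>m<n. (B * B) $ m * L m j)"
  proof -
    have "(\<Sum>i<n. L i j * (B * (fps_X^0 * B)) $ i) = (\<Sum>i<n. L i j * (if i < 0 then 0 else (B * B) $ (i - 0)))"
      by (simp only: Xk_nth)
    also have "\<dots> = (\<Sum>m<n. (B * B) $ m * (if m + 0 < n then L (m + 0) j else 0))"
      by (rule reidx)
    finally show ?thesis by simp
  qed
  have F2: "(\<Sum>i<n. L i 0 * (B * (fps_X^j * B)) $ i) = (\<Sum>m<n. (B * B) $ m * (if m + j < n then L (m + j) 0 else 0))"
    unfolding Xk_nth by (rule reidx)
  show ?thesis using E1 E2 F1 F2 unfolding B_def[symmetric]
    by (simp add: right_diff_distrib sum_subtractf)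
qed

lemma W_eqb:
  assumes "n \<ge> 1" "eqb n (Pf y) (inverse u)" "u $ 0 \<noteq> 0"
  shows "(\<Sum>m<n. (inverse (Pf y) * inverse (Pf y)) $ m * a m) = (\<Sum>m<n. (u * u) $ m * a m)"
proof -
  have "eqb n (inverse (inverse u)) (inverse (Pf y))"
    by (rule eqb_inverse) (use assms in \<open>auto intro: eqb_sym\<close>)
  then have "eqb n u (inverse (Pf y))" using assms(3) by simp
  then have "eqb n (u * u) (inverse (Pf y) * inverse (Pf y))" using eqb_mult by blast
  then show ?thesis unfolding eqb_def by (intro sum.cong) auto
qed

lemma Pf_Tone: "n \<ge> 1 \<Longrightarrow> Pf (Tone n) = 1"
  by (rule fps_ext) (simp add: Tone_def)

lemma Tone_ball: "r > 0 \<Longrightarrow> Tone n \<in> ball_n n (Tone n) r"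
  by (simp add: ball_n_def supp_n_def Tone_def)

lemma converse:
  assumes n1: "n \<ge> 1" and U: "uncurling_metric n (Tmul n) (Tone n) L"
  shows "\<exists>t. supp_n n t \<and> (\<forall>i<n. \<forall>j<n. L i j = mat_mult n (toep n t) (exch n) i j)"
proof -
  obtain r where r: "r > 0" and P: "\<forall>y\<in>ball_n n (Tone n) r. \<forall>j<n. \<forall>k<n. \<exists>D.
          has_partial (\<lambda>z. \<Sum>i<n. alg_inv n (Tmul n) (Tone n) z i * L i j) k y D \<and>
          has_partial (\<lambda>z. \<Sum>i<n. alg_inv n (Tmul n) (Tone n) z i * L i k) j y D"
    using U unfolding uncurling_metric_def by blast
  define a where "a j m = L m j - (if m + j < n then L (m + j) 0 else 0)" for j m
  have C: "(\<Sum>m<n. (inverse (Pf y) * inverse (Pf y)) $ m * a j m) = 0"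
    if "y \<in> ball_n n (Tone n) r" "y 0 \<noteq> 0" "j < n" for y j
    unfolding a_def
    by (rule cond_y[OF ball_supp[OF that(1)] that(2,3)]) (use P that n1 in auto)
  have a0: "a j 0 = 0" if "j < n" for j
  proof -
    have e: "eqb n (Pf (Tone n)) (inverse 1)" using n1 by (simp add: Pf_Tone)
    have "0 = (\<Sum>m<n. (inverse (Pf (Tone n)) * inverse (Pf (Tone n))) $ m * a j m)"
      using C[OF Tone_ball[OF r] _ that] n1 by (simp add: Tone0)
    also have "\<dots> = (\<Sum>m<n. (1 * 1 :: real fps) $ m * a j m)"
      by (rule W_eqb[OF n1 e]) simp
    also have "\<dots> = (\<Sum>m<n. (if m = 0 then 1 else 0) * a j m)" by simp
    also have "\<dots> = a j 0" using n1 by (simp only: sum_delta_mult) simp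
    finally show ?thesis by simp
  qed
  have ap: "a j p = 0" if jp: "j < n" "1 \<le> p" "p < n" for j p
  proof -
    define u where "u e = 1 + fps_const e * fps_X^p" for e :: real
    define Q where "Q e = Pf ((Tone n)(p := Tone n p + e))" for e
    have Qu: "Q e = u e" for e
      unfolding Q_def u_def using jp n1 by (intro fps_ext) (auto simp: Tone_def)
    define d where "d e = sqrt (\<Sum>i<n. ((inverse (Q e)) $ i - Tone n i)^2)" for e
    have cd: "isCont d 0"
      unfolding d_def Q_def using n1 by (intro continuous_intros cont_inv) (simp add: Tone0)
    have d0: "d 0 = 0"
    proof -
      have "Q 0 = 1" unfolding Q_def using n1 by (simp add: Pf_Tone)
      then show ?thesis unfolding d_def using n1 by (simp add: Tone_def)
    qed
    have "\<forall>\<^sub>F e in at 0. d e < r"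
      using cd r unfolding isCont_def d0 by (rule order_tendstoD(2))
    moreover have "2 * e * a j p + e^2 * (if 2 * p < n then a j (2*p) else 0) = 0" if de: "d e < r" for e
    proof -
      define y where "y = trn n (inverse (u e))"
      have u0: "u e $ 0 = 1" using jp by (simp add: u_def)
      have yb: "y \<in> ball_n n (Tone n) r"
      proof -
        have "(\<Sum>i<n. (y i - Tone n i)^2) = (\<Sum>i<n. ((inverse (Q e)) $ i - Tone n i)^2)"
          by (intro sum.cong) (auto simp: y_def trn_def Qu)
        then show ?thesis using de unfolding ball_n_def d_def y_def by simp
      qed
      have y0: "y 0 \<noteq> 0" using n1 u0 by (simp add: y_def trn_def)
      have "0 = (\<Sum>m<n. (inverse (Pf y) * inverse (Pf y)) $ m * a j m)"
        using C[OF yb y0 jp(1)] by simp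
      also have "\<dots> = (\<Sum>m<n. (u e * u e) $ m * a j m)"
        by (rule W_eqb[OF n1 _ ]) (simp_all add: y_def eqb_Pf_trn u0)
      also have "\<dots> = a j 0 + 2 * e * a j p + e^2 * (if 2 * p < n then a j (2*p) else 0)"
        unfolding u_def by (rule sum_uu[OF jp(2,3)])
      finally show ?thesis using a0[OF jp(1)] by simp
    qed
    ultimately have "\<forall>\<^sub>F e in at 0. 2 * e * a j p + e^2 * (if 2 * p < n then a j (2*p) else 0) = 0"
      by (rule eventually_mono)
    then obtain \<delta> :: real where dp: "\<delta> > 0" and
      H: "\<And>x. x \<noteq> 0 \<Longrightarrow> dist x 0 < \<delta> \<Longrightarrow> 2 * x * a j p + x^2 * (if 2 * p < n then a j (2*p) else 0) = 0"
      unfolding eventually_at by auto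
    define b where "b = (if 2 * p < n then a j (2*p) else 0)"
    have h1: "2 * (\<delta>/2) * a j p + (\<delta>/2)^2 * b = 0" using H[of "\<delta>/2"] dp by (simp add: b_def dist_real_def)
    have h2: "2 * (-\<delta>/2) * a j p + (-\<delta>/2)^2 * b = 0" using H[of "-\<delta>/2"] dp by (simp add: b_def dist_real_def)
    have g1: "\<delta> * a j p + \<delta> * \<delta> * b / 4 = 0" using h1 by (simp add: power2_eq_square algebra_simps)
    have g2: "- (\<delta> * a j p) + \<delta> * \<delta> * b / 4 = 0" using h2 by (simp add: power2_eq_square algebra_simps)
    have "\<delta> * a j p = 0" using g1 g2 by linarith
    then show ?thesis using dp by simp
  qed
  have aa: "a j m = 0" if "j < n" "m < n" for j m
    using that a0 ap by (cases "m = 0") auto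
  define t where "t s = (if s < n then L (n - 1 - s) 0 else 0)" for s
  have "supp_n n t" by (simp add: supp_n_def t_def)
  moreover have "\<forall>i<n. \<forall>j<n. L i j = mat_mult n (toep n t) (exch n) i j"
  proof (intro allI impI)
    fix i j assume ij: "i < n" "j < n"
    have "L i j = (if i + j < n then L (i + j) 0 else 0)" using aa[OF ij(2,1)] by (simp add: a_def)
    then show "L i j = mat_mult n (toep n t) (exch n) i j"
      unfolding mat_formula[OF ij] by (simp add: t_def)
  qed
  ultimately show ?thesis by blast
qed


theorem theorem10p4:
  fixes n :: nat
  assumes "n \<ge> 1"
  shows "(\<forall>t. supp_n n t \<longrightarrow>
            mat_mult n (toep n t) (exch n) \<in> anti_rotor n (Tmul n) (Tone n)) \<and>
         (\<forall>L \<in> anti_rotor n (Tmul n) (Tone n). \<exists>t. supp_n n t \<and>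
            (\<forall>i<n. \<forall>j<n. L i j = mat_mult n (toep n t) (exch n) i j))"
  using forward[OF assms] converse[OF assms] unfolding anti_rotor_def by blast

end
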